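(* Let $E$ be an AM-space, let $X$ be an arbitrary Banach space and let $T:E\to X$ be a continuous operator. Then $T$ is uaw-Dunford–Pettis if and only if $T$ is Dunford–Pettis.
   Context: A net $(x_\alpha)$ in a Banach lattice $E$ is uaw-convergent to $x$ (written $x_\alpha\xrightarrow{uaw}x$) if $|x_\alpha-x|\wedge u\to 0$ weakly for every $u\in E_+$. An operator $T$ from a Banach lattice $E$ into a Banach space $X$ is uaw-Dunford–Pettis if for every norm bounded sequence $(x_n)$ in $E$ with $x_n\xrightarrow{uaw}0$ one has $\|Tx_n\|\to 0$. An operator is Dunford–Pettis if it maps weakly null sequences to norm null sequences. *)

theory Defs
  imports "HOL-Analysis.Analysis"
begin

class banach_lattice = banach + ordered_real_vector + lattice +
  assumes lattice_norm: "sup x (- x) \<le> sup y (- y) \<Longrightarrow> norm x \<le> norm y"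

definition lmod :: "'a::banach_lattice \<Rightarrow> 'a" where
  "lmod x = sup x (- x)"

class am_space = banach_lattice +
  assumes am_norm: "0 \<le> x \<Longrightarrow> 0 \<le> y \<Longrightarrow> norm (sup x y) = max (norm x) (norm y)"

definition weakly_convergent_to :: "(nat \<Rightarrow> 'a::real_normed_vector) \<Rightarrow> 'a \<Rightarrow> bool" where
  "weakly_convergent_to x l \<longleftrightarrow>
     (\<forall>f::'a \<Rightarrow> real. bounded_linear f \<longrightarrow> (\<lambda>n. f (x n)) \<longlonglongrightarrow> f l)"

definition uaw_convergent_to :: "(nat \<Rightarrow> 'a::banach_lattice) \<Rightarrow> 'a \<Rightarrow> bool" where
  "uaw_convergent_to x l \<longleftrightarrow>
     (\<forall>u. 0 \<le> u \<longrightarrow> weakly_convergent_to (\<lambda>n. inf (lmod (x n - l)) u) 0)"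

definition dunford_pettis :: "('a::real_normed_vector \<Rightarrow> 'b::real_normed_vector) \<Rightarrow> bool" where
  "dunford_pettis T \<longleftrightarrow>
     (\<forall>x. weakly_convergent_to x 0 \<longrightarrow> (\<lambda>n. norm (T (x n))) \<longlonglongrightarrow> 0)"

definition uaw_dunford_pettis :: "('a::banach_lattice \<Rightarrow> 'b::real_normed_vector) \<Rightarrow> bool" where
  "uaw_dunford_pettis T \<longleftrightarrow>
     (\<forall>x. bounded (range x) \<longrightarrow> uaw_convergent_to x 0 \<longrightarrow> (\<lambda>n. norm (T (x n))) \<longlonglongrightarrow> 0)"

end

theory Submission
  imports Defs "HOL-Library.Lattice_Algebras"
begin

subclass (in banach_lattice) lattice_ab_group_add ..

lemma sup_neg_ge0: "(0::'a::lattice_ab_group_add) \<le> sup x (- x)"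
proof -
  have "x + (- x) \<le> sup x (- x) + sup x (- x)"
    by (intro add_mono) auto
  then show ?thesis by simp
qed

lemma lmod_ge0: "0 \<le> lmod x"
  unfolding lmod_def by (rule sup_neg_ge0)

lemma lmod_pos: "0 \<le> (x::'a::banach_lattice) \<Longrightarrow> lmod x = x"
  unfolding lmod_def
proof -
  assume "0 \<le> x"
  then have "- x \<le> x" by (simp add: minus_le_self_iff)
  then show "sup x (- x) = x" by (rule sup.absorb1)
qed

lemma norm_mono_pos: "0 \<le> (y::'a::banach_lattice) \<Longrightarrow> y \<le> x \<Longrightarrow> norm y \<le> norm x"
  using lattice_norm[of y x] lmod_pos[of y] lmod_pos[of x] unfolding lmod_def by auto

lemma norm_lmod: "norm (lmod (x::'a::banach_lattice)) = norm x"
proof -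
  have "lmod (lmod x) = lmod x" by (rule lmod_pos[OF lmod_ge0])
  then show ?thesis using lattice_norm[of "lmod x" x] lattice_norm[of x "lmod x"]
    unfolding lmod_def by (metis order.refl order.antisym)
qed

lemma sup0_le_lmod: "sup x 0 \<le> lmod (x::'a::banach_lattice)"
proof -
  have "x \<le> lmod x" unfolding lmod_def by simp
  then show ?thesis using lmod_ge0[of x] by (rule sup_least)
qed

lemma norm_sup0_le: "norm (sup x 0) \<le> norm (x::'a::banach_lattice)"
proof -
  have "norm (sup x 0) \<le> norm (lmod x)"
    by (rule norm_mono_pos[OF _ sup0_le_lmod]) simp
  then show ?thesis by (simp add: norm_lmod)
qed

lemma scaleR_sup: "0 \<le> c \<Longrightarrow> c *\<^sub>R sup a b = sup (c *\<^sub>R a) (c *\<^sub>R (b::'a::banach_lattice))"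
proof (cases "c = 0")
  case False
  assume c: "0 \<le> c"
  with False have c': "0 < c" by simp
  show ?thesis
  proof (rule order.antisym)
    have "sup a b \<le> inverse c *\<^sub>R sup (c *\<^sub>R a) (c *\<^sub>R b)"
    proof (rule sup_least)
      have "a = inverse c *\<^sub>R (c *\<^sub>R a)" using c' by simp
      also have "\<dots> \<le> inverse c *\<^sub>R sup (c *\<^sub>R a) (c *\<^sub>R b)"
        by (rule scaleR_left_mono) (use c' in auto)
      finally show "a \<le> inverse c *\<^sub>R sup (c *\<^sub>R a) (c *\<^sub>R b)" .
      have "b = inverse c *\<^sub>R (c *\<^sub>R b)" using c' by simp
      also have "\<dots> \<le> inverse c *\<^sub>R sup (c *\<^sub>R a) (c *\<^sub>R b)"
        by (rule scaleR_left_mono) (use c' in auto)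
      finally show "b \<le> inverse c *\<^sub>R sup (c *\<^sub>R a) (c *\<^sub>R b)" .
    qed
    then have "c *\<^sub>R sup a b \<le> c *\<^sub>R (inverse c *\<^sub>R sup (c *\<^sub>R a) (c *\<^sub>R b))"
      by (rule scaleR_left_mono) (use c in auto)
    then show "c *\<^sub>R sup a b \<le> sup (c *\<^sub>R a) (c *\<^sub>R b)" using c' by simp
    show "sup (c *\<^sub>R a) (c *\<^sub>R b) \<le> c *\<^sub>R sup a b"
      by (intro sup_least scaleR_left_mono) (use c in auto)
  qed
qed simp


definition sublat :: "('a::banach_lattice \<Rightarrow> real) \<Rightarrow> bool" where
  "sublat p \<longleftrightarrow> (\<forall>x y. p (x + y) \<le> p x + p y) \<and> (\<forall>c x. 0 \<le> c \<longrightarrow> p (c *\<^sub>R x) = c * p x)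
     \<and> (\<forall>x y. p (sup x y) \<le> max (p x) (p y))"

lemma sublatD:
  assumes "sublat p"
  shows "p (x + y) \<le> p x + p y" "0 \<le> c \<Longrightarrow> p (c *\<^sub>R x) = c * p x" "p (sup x y) \<le> max (p x) (p y)"
  using assms unfolding sublat_def by auto

lemma sublat_0: "sublat p \<Longrightarrow> p 0 = 0"
  using sublatD(2)[of p 0 0] by simp

lemma sublat_neg: "sublat p \<Longrightarrow> - p (- x) \<le> p x"
  using sublatD(1)[of p x "- x"] sublat_0[of p] by simp

lemma inf_add_bound:
  fixes f :: "'i \<Rightarrow> real" and h :: "'j \<Rightarrow> real"
  assumes "A \<noteq> {}" "B \<noteq> {}" "bdd_below (f ` A)" "bdd_below (h ` B)"
    and "\<And>a b. a \<in> A \<Longrightarrow> b \<in> B \<Longrightarrow> X \<le> f a + h b"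
  shows "X \<le> (INF a\<in>A. f a) + (INF b\<in>B. h b)"
proof -
  have "X - h b \<le> (INF a\<in>A. f a)" if "b \<in> B" for b
    using assms(1) by (rule cINF_greatest) (use assms(5) that in force)
  then have "X - (INF a\<in>A. f a) \<le> h b" if "b\<in>B" for b using that by force
  then have "X - (INF a\<in>A. f a) \<le> (INF b\<in>B. h b)" using assms(2) by (intro cINF_greatest)
  then show ?thesis by simp
qed

lemma inf_max_bound:
  fixes f :: "'i \<Rightarrow> real" and h :: "'j \<Rightarrow> real"
  assumes "A \<noteq> {}" "B \<noteq> {}" "bdd_below (f ` A)" "bdd_below (h ` B)"
    and "\<And>a b. a \<in> A \<Longrightarrow> b \<in> B \<Longrightarrow> X \<le> max (f a) (h b)"
  shows "X \<le> max (INF a\<in>A. f a) (INF b\<in>B. h b)"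
proof (rule ccontr)
  assume "\<not> ?thesis"
  then have "(INF a\<in>A. f a) < X" "(INF b\<in>B. h b) < X" by auto
  then obtain a b where "a \<in> A" "f a < X" "b \<in> B" "h b < X"
    using cINF_less_iff[OF assms(1,3)] cINF_less_iff[OF assms(2,4)] by metis
  with assms(5)[of a b] show False by auto
qed

lemma sublat_min_linear:
  fixes g :: "'a::banach_lattice \<Rightarrow> real"
  assumes g: "sublat g"
  shows "\<exists>\<phi>. sublat \<phi> \<and> (\<forall>x. \<phi> x \<le> g x) \<and> (\<forall>x. \<phi> (- x) = - \<phi> x)"
proof -
  define S where "S = {p. sublat p \<and> (\<forall>x. p x \<le> g x)}"
  define P where "P = (\<lambda>(p::'a\<Rightarrow>real) q. \<forall>x. q x \<le> p x)"
  have po: "partial_order_on S (relation_of P S)"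
  proof (rule partial_order_on_relation_ofI)
    show "P a a" for a by (simp add: P_def)
    show "P a c" if "a \<in> S" "b \<in> S" "c \<in> S" "P a b" "P b c" for a b c
      using that(4,5) unfolding P_def by (meson order.trans)
    show "a = b" if "a \<in> S" "b \<in> S" "P a b" "P b a" for a b
    proof (rule ext)
      fix x show "a x = b x" using that(3,4) unfolding P_def by (meson order.antisym)
    qed
  qed
  have lowS: "- g (- x) \<le> p x" if "p \<in> S" for p x
  proof -
    have "- g (- x) \<le> - p (- x)" using that by (auto simp: S_def)
    also have "\<dots> \<le> p x" using that by (intro sublat_neg) (auto simp: S_def)
    finally show ?thesis .
  qed
  have ch: "\<exists>u\<in>S. \<forall>a\<in>C. P a u" if C: "C \<in> Chains (relation_of P S)" for C
  proof (cases "C = {}")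
    case True then show ?thesis using g by (auto simp: S_def)
  next
    case False
    have CS: "C \<subseteq> S" using C by (auto simp: Chains_def relation_of_def)
    have cmp: "\<exists>r\<in>C. (\<forall>x. r x \<le> p x) \<and> (\<forall>x. r x \<le> q x)" if "p \<in> C" "q \<in> C" for p q
    proof -
      have "(p, q) \<in> relation_of P S \<or> (q, p) \<in> relation_of P S"
        using C that unfolding Chains_def by auto
      then show ?thesis
        using that unfolding relation_of_def P_def by auto
    qed
    have bdd: "bdd_below ((\<lambda>p. p x) ` C)" for x
      using lowS CS by (intro bdd_belowI[of _ "- g (- x)"]) auto
    define u where "u x = (INF p\<in>C. p x)" for x
    have u_le: "u x \<le> p x" if "p \<in> C" for p x
      unfolding u_def using bdd that by (rule cINF_lower)
    have u_ge: "X \<le> u x" if "\<And>p. p \<in> C \<Longrightarrow> X \<le> p x" for X x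
      unfolding u_def using False that by (rule cINF_greatest)
    have subC: "sublat p" if "p \<in> C" for p using CS that by (auto simp: S_def)
    have "sublat u"
      unfolding sublat_def
    proof (intro conjI allI impI)
      fix x y
      show "u (x + y) \<le> u x + u y"
        unfolding u_def[of x] u_def[of y]
      proof (rule inf_add_bound[OF False False bdd bdd])
        fix p q assume pq: "p \<in> C" "q \<in> C"
        then obtain r where r: "r \<in> C" "\<forall>x. r x \<le> p x" "\<forall>x. r x \<le> q x" using cmp by blast
        have "u (x + y) \<le> r (x + y)" using u_le r by auto
        also have "\<dots> \<le> r x + r y" using subC[OF r(1)] by (rule sublatD)
        also have "\<dots> \<le> p x + q y" using r by (intro add_mono) auto
        finally show "u (x + y) \<le> p x + q y" .
      qed
      show "u (sup x y) \<le> max (u x) (u y)"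
        unfolding u_def[of x] u_def[of y]
      proof (rule inf_max_bound[OF False False bdd bdd])
        fix p q assume pq: "p \<in> C" "q \<in> C"
        then obtain r where r: "r \<in> C" "\<forall>x. r x \<le> p x" "\<forall>x. r x \<le> q x" using cmp by blast
        have "u (sup x y) \<le> r (sup x y)" using u_le r by auto
        also have "\<dots> \<le> max (r x) (r y)" using subC[OF r(1)] by (rule sublatD)
        also have "\<dots> \<le> max (p x) (q y)" using r by (intro max.mono) auto
        finally show "u (sup x y) \<le> max (p x) (q y)" .
      qed
    next
      fix c :: real and x :: 'a assume c: "0 \<le> c"
      show "u (c *\<^sub>R x) = c * u x"
      proof (cases "c = 0")
        case True
        obtain p0 where p0: "p0 \<in> C" using False by auto
        have "u 0 \<le> p0 0" using u_le p0 by auto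
        moreover have "p0 0 = 0" using subC[OF p0] by (rule sublat_0)
        moreover have "0 \<le> u 0" by (rule u_ge) (use subC sublat_0 in force)
        ultimately show ?thesis using True by simp
      next
        case False
        with c have c': "0 < c" by simp
        have "u (c *\<^sub>R x) / c \<le> u x"
        proof (rule u_ge)
          fix p assume p: "p \<in> C"
          have "u (c *\<^sub>R x) \<le> p (c *\<^sub>R x)" using u_le p by auto
          also have "\<dots> = c * p x" using subC[OF p] c by (rule sublatD)
          finally show "u (c *\<^sub>R x) / c \<le> p x" using c' by (simp add: field_simps)
        qed
        moreover have "c * u x \<le> u (c *\<^sub>R x)"
        proof (rule u_ge)
          fix p assume p: "p \<in> C"
          have "c * u x \<le> c * p x" using u_le p c by (intro mult_left_mono) auto
          also have "\<dots> = p (c *\<^sub>R x)" using subC[OF p] c by (simp add: sublatD)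
          finally show "c * u x \<le> p (c *\<^sub>R x)" .
        qed
        ultimately show ?thesis using c' by (simp add: field_simps)
      qed
    qed
    moreover have "u x \<le> g x" for x
    proof -
      obtain p0 where p0: "p0 \<in> C" using False by auto
      then have "p0 \<in> S" using CS by auto
      then have "p0 x \<le> g x" by (simp add: S_def)
      then show ?thesis using u_le[OF p0, of x] by simp
    qed
    ultimately have "u \<in> S" by (auto simp: S_def)
    moreover have "\<forall>a\<in>C. P a u" using u_le by (auto simp: P_def)
    ultimately show ?thesis by blast
  qed
  from predicate_Zorn[OF po ch] obtain m where m: "m \<in> S" "\<And>a. a \<in> S \<Longrightarrow> P m a \<Longrightarrow> a = m"
    by blast
  have msub: "sublat m" and mg: "\<And>x. m x \<le> g x" using m(1) by (auto simp: S_def)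
  have mneg: "m (- z) = - m z" for z
  proof -
    define q where "q x = (INF t\<in>{0::real..}. m (x + t *\<^sub>R z) - t * m z)" for x
    have ne: "{0::real..} \<noteq> {}" by auto
    have lowq: "- m (- x) \<le> m (x + t *\<^sub>R z) - t * m z" if "0 \<le> t" for x t
    proof -
      have "m (t *\<^sub>R z) \<le> m (x + t *\<^sub>R z) + m (- x)"
        using sublatD(1)[OF msub, of "x + t *\<^sub>R z" "- x"] by simp
      then show ?thesis using sublatD(2)[OF msub that, of z] by simp
    qed
    have bddq: "bdd_below ((\<lambda>t. m (x + t *\<^sub>R z) - t * m z) ` {0..})" for x
      using lowq by (intro bdd_belowI[of _ "- m (- x)"]) auto
    have q_le: "q x \<le> m (x + t *\<^sub>R z) - t * m z" if "0 \<le> t" for x t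
      unfolding q_def using bddq that by (intro cINF_lower) auto
    have q_ge: "X \<le> q x" if "\<And>t. 0 \<le> t \<Longrightarrow> X \<le> m (x + t *\<^sub>R z) - t * m z" for X x
      unfolding q_def using ne that by (intro cINF_greatest) auto
    have qm: "q x \<le> m x" for x using q_le[of 0 x] by simp
    have monot: "m (x + r *\<^sub>R z) - r * m z \<le> m (x + t *\<^sub>R z) - t * m z" if "0 \<le> t" "t \<le> r" for x t r
    proof -
      have "m (x + r *\<^sub>R z) = m ((x + t *\<^sub>R z) + (r - t) *\<^sub>R z)"
        by (simp add: algebra_simps)
      also have "\<dots> \<le> m (x + t *\<^sub>R z) + m ((r - t) *\<^sub>R z)" using msub by (rule sublatD)
      also have "m ((r - t) *\<^sub>R z) = (r - t) * m z" using msub that by (intro sublatD) auto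
      finally show ?thesis by (simp add: algebra_simps)
    qed
    have "sublat q"
      unfolding sublat_def
    proof (intro conjI allI impI)
      fix x y
      show "q (x + y) \<le> q x + q y"
        unfolding q_def[of x] q_def[of y]
      proof (rule inf_add_bound[OF ne ne bddq bddq])
        fix t s :: real assume ts: "t \<in> {0..}" "s \<in> {0..}"
        have "q (x + y) \<le> m (x + y + (t + s) *\<^sub>R z) - (t + s) * m z" using ts by (intro q_le) auto
        also have "m (x + y + (t + s) *\<^sub>R z) = m ((x + t *\<^sub>R z) + (y + s *\<^sub>R z))"
          by (simp add: algebra_simps)
        also have "\<dots> \<le> m (x + t *\<^sub>R z) + m (y + s *\<^sub>R z)" using msub by (rule sublatD)
        finally show "q (x + y) \<le> (m (x + t *\<^sub>R z) - t * m z) + (m (y + s *\<^sub>R z) - s * m z)"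
          by (simp add: algebra_simps)
      qed
      show "q (sup x y) \<le> max (q x) (q y)"
        unfolding q_def[of x] q_def[of y]
      proof (rule inf_max_bound[OF ne ne bddq bddq])
        fix t s :: real assume ts: "t \<in> {0..}" "s \<in> {0..}"
        define r where "r = max t s"
        have r: "0 \<le> r" "t \<le> r" "s \<le> r" using ts by (auto simp: r_def)
        have "q (sup x y) \<le> m (sup x y + r *\<^sub>R z) - r * m z" using r by (intro q_le) auto
        also have "sup x y + r *\<^sub>R z = sup (x + r *\<^sub>R z) (y + r *\<^sub>R z)"
          by (rule add_sup_distrib_right)
        also have "m \<dots> - r * m z \<le> max (m (x + r *\<^sub>R z)) (m (y + r *\<^sub>R z)) - r * m z"
          using sublatD(3)[OF msub] by simp
        also have "\<dots> = max (m (x + r *\<^sub>R z) - r * m z) (m (y + r *\<^sub>R z) - r * m z)"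
          by (simp add: max_diff_distrib_left)
        also have "\<dots> \<le> max (m (x + t *\<^sub>R z) - t * m z) (m (y + s *\<^sub>R z) - s * m z)"
          using ts r by (intro max.mono monot) auto
        finally show "q (sup x y) \<le> max (m (x + t *\<^sub>R z) - t * m z) (m (y + s *\<^sub>R z) - s * m z)" .
      qed
    next
      fix c :: real and x :: 'a assume c: "0 \<le> c"
      show "q (c *\<^sub>R x) = c * q x"
      proof (cases "c = 0")
        case True
        have "q 0 \<le> 0" using q_le[of 0 0] by (simp add: sublat_0[OF msub])
        moreover have "0 \<le> q 0"
          by (rule q_ge) (simp add: sublatD(2)[OF msub])
        ultimately show ?thesis using True by simp
      next
        case False
        with c have c': "0 < c" by simp
        have "q (c *\<^sub>R x) / c \<le> q x"
        proof (rule q_ge)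
          fix t :: real assume t: "0 \<le> t"
          have "q (c *\<^sub>R x) \<le> m (c *\<^sub>R x + (c * t) *\<^sub>R z) - (c * t) * m z"
            using t c by (intro q_le) auto
          also have "m (c *\<^sub>R x + (c * t) *\<^sub>R z) = m (c *\<^sub>R (x + t *\<^sub>R z))"
            by (simp add: algebra_simps)
          also have "\<dots> = c * m (x + t *\<^sub>R z)" using msub c by (rule sublatD)
          finally show "q (c *\<^sub>R x) / c \<le> m (x + t *\<^sub>R z) - t * m z"
            using c' by (simp add: field_simps)
        qed
        moreover have "c * q x \<le> q (c *\<^sub>R x)"
        proof (rule q_ge)
          fix t :: real assume t: "0 \<le> t"
          have "c * q x \<le> c * (m (x + (t / c) *\<^sub>R z) - (t / c) * m z)"
            using t c' by (intro mult_left_mono q_le) auto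
          also have "\<dots> = m (c *\<^sub>R (x + (t / c) *\<^sub>R z)) - t * m z"
          proof -
            have e1: "m (c *\<^sub>R (x + (t / c) *\<^sub>R z)) = c * m (x + (t / c) *\<^sub>R z)"
              using msub c by (rule sublatD)
            show ?thesis unfolding e1 using c' by (simp add: right_diff_distrib)
          qed
          also have "c *\<^sub>R (x + (t / c) *\<^sub>R z) = c *\<^sub>R x + t *\<^sub>R z"
            using c' by (simp add: algebra_simps)
          finally show "c * q x \<le> m (c *\<^sub>R x + t *\<^sub>R z) - t * m z" .
        qed
        ultimately show ?thesis using c' by (simp add: field_simps)
      qed
    qed
    moreover have "q x \<le> g x" for x using qm[of x] mg[of x] by simp
    ultimately have "q \<in> S" by (auto simp: S_def)
    moreover have "P m q" using qm by (auto simp: P_def)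
    ultimately have "q = m" using m(2) by blast
    then have "m (- z) \<le> m (- z + 1 *\<^sub>R z) - 1 * m z" using q_le[of 1 "- z"] by simp
    then have "m (- z) \<le> - m z" by (simp add: sublat_0[OF msub])
    moreover have "- m (- z) \<le> m z" using msub by (rule sublat_neg)
    ultimately show ?thesis by simp
  qed
  show ?thesis using msub mg mneg by blast
qed


definition pn :: "'a::banach_lattice \<Rightarrow> real" where "pn x = norm (sup x 0)"

lemma pn_mono: "a \<le> b \<Longrightarrow> pn a \<le> pn (b::'a::banach_lattice)"
  unfolding pn_def by (rule norm_mono_pos[OF _ sup_mono]) auto

lemma pn_add: "pn (a + b) \<le> pn a + pn (b::'a::banach_lattice)"
proof -
  have "sup (a + b) 0 \<le> sup a 0 + sup b 0"
    by (intro sup_least add_mono add_nonneg_nonneg) auto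
  then have "norm (sup (a + b) 0) \<le> norm (sup a 0 + sup b 0)"
    by (intro norm_mono_pos) auto
  also have "\<dots> \<le> norm (sup a 0) + norm (sup b 0)" by (rule norm_triangle_ineq)
  finally show ?thesis unfolding pn_def .
qed

lemma pn_scale: "0 \<le> c \<Longrightarrow> pn (c *\<^sub>R a) = c * pn (a::'a::banach_lattice)"
proof -
  assume c: "0 \<le> c"
  have "c *\<^sub>R sup a 0 = sup (c *\<^sub>R a) 0" using scaleR_sup[OF c, of a 0] by simp
  then have "sup (c *\<^sub>R a) 0 = c *\<^sub>R sup a 0" by simp
  then show ?thesis unfolding pn_def using c by simp
qed

lemma pn_sup: "pn (sup a b) = max (pn a) (pn (b::'a::am_space))"
proof -
  have "sup (sup a b) 0 = sup (sup a 0) (sup b 0)"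
    by (simp add: sup_aci)
  then show ?thesis unfolding pn_def by (simp add: am_norm)
qed

lemma pn_le_norm: "pn a \<le> norm (a::'a::banach_lattice)"
  unfolding pn_def by (rule norm_sup0_le)

lemma pn_pos_shift: "0 \<le> b \<Longrightarrow> pn (a + b) \<le> pn a + norm (b::'a::banach_lattice)"
proof -
  assume b: "0 \<le> b"
  have "sup (a + b) 0 \<le> sup a 0 + b"
    using b by (intro sup_least add_mono add_nonneg_nonneg) auto
  then have "norm (sup (a + b) 0) \<le> norm (sup a 0 + b)"
    by (intro norm_mono_pos) auto
  also have "\<dots> \<le> norm (sup a 0) + norm b" by (rule norm_triangle_ineq)
  finally show ?thesis unfolding pn_def .
qed

lemma pn_lower: "0 \<le> d \<Longrightarrow> norm d \<le> pn (x + d) + norm (x::'a::banach_lattice)"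
proof -
  assume d: "0 \<le> d"
  have "d \<le> sup (x + d) 0 + sup (- x) 0"
  proof -
    have "d = (x + d) + (- x)" by simp
    also have "\<dots> \<le> sup (x + d) 0 + sup (- x) 0" by (intro add_mono) auto
    finally show ?thesis .
  qed
  then have "norm d \<le> norm (sup (x + d) 0 + sup (- x) 0)" using d by (rule norm_mono_pos[rotated])
  also have "\<dots> \<le> pn (x + d) + pn (- x)" unfolding pn_def by (rule norm_triangle_ineq)
  also have "pn (- x) \<le> norm x" using pn_le_norm[of "- x"] by simp
  finally show ?thesis by simp
qed

lemma pn_nonpos: "a \<le> 0 \<Longrightarrow> pn (a::'a::banach_lattice) = 0"
  unfolding pn_def by (simp add: sup.absorb2)

lemma pn_nonneg_eq: "0 \<le> a \<Longrightarrow> pn (a::'a::banach_lattice) = norm a"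
  unfolding pn_def by (simp add: sup.absorb1)

lemma lattice_hom_exists:
  fixes D :: "nat \<Rightarrow> 'a::am_space"
  assumes D0: "\<And>j. 0 \<le> D j" and Ddec: "\<And>j. D (Suc j) \<le> D j" and eta: "\<And>j. \<eta> \<le> norm (D j)"
  shows "\<exists>\<phi>. (\<forall>x y. \<phi> (x + y) = \<phi> x + \<phi> y) \<and> (\<forall>c x. \<phi> (c *\<^sub>R x) = c * \<phi> x)
     \<and> (\<forall>x. \<bar>\<phi> x\<bar> \<le> norm x) \<and> (\<forall>x y. \<phi> (sup x y) = max (\<phi> x) (\<phi> y)) \<and> (\<forall>j. \<eta> \<le> \<phi> (D j))"
proof -
  have Dmono: "D k \<le> D j" if "j \<le> k" for j k
    using that by (rule lift_Suc_antimono_le[of D, OF Ddec])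
  have Nmono: "norm (D k) \<le> norm (D j)" if "j \<le> k" for j k
    using Dmono[OF that] D0 by (intro norm_mono_pos)
  define m where "m = (INF j. norm (D j))"
  have bddN: "bdd_below (range (\<lambda>j. norm (D j)))" by (intro bdd_belowI[of _ 0]) auto
  have m_le: "m \<le> norm (D j)" for j unfolding m_def using bddN by (rule cINF_lower) auto
  have eta_m: "\<eta> \<le> m" unfolding m_def using eta by (intro cINF_greatest) auto
  have m_approx: "\<exists>L. norm (D L) < m + e" if "0 < e" for e
  proof -
    have "(INF j. norm (D j)) < m + e" using that by (simp add: m_def)
    then show ?thesis using cINF_less_iff[OF _ bddN] by auto
  qed
  define I where "I = (UNIV :: nat set) \<times> {0::real..}"
  define F where "F x = (\<lambda>(j, t). pn (x + t *\<^sub>R D j) - t * m)" for x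
  have Ine: "I \<noteq> {}" by (auto simp: I_def)
  have Icases: "\<exists>j t. i = (j, t) \<and> 0 \<le> t" if "i \<in> I" for i
    using that unfolding I_def by (intro exI[of _ "fst i"] exI[of _ "snd i"]) auto
  have Flow: "- norm x \<le> F x i" if iI: "i \<in> I" for x i
  proof -
    obtain j t where i: "i = (j, t)" "0 \<le> t" using Icases[OF iI] by blast
    have "norm (t *\<^sub>R D j) \<le> pn (x + t *\<^sub>R D j) + norm x"
      using D0[of j] i by (intro pn_lower) (auto intro: scaleR_nonneg_nonneg)
    moreover have "t * m \<le> norm (t *\<^sub>R D j)" using i m_le[of j] by (simp add: mult_left_mono)
    ultimately show ?thesis using i by (simp add: F_def)
  qed
  have bddF: "bdd_below (F x ` I)" for x using Flow by (intro bdd_belowI[of _ "- norm x"]) auto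
  define g where "g x = (INF i\<in>I. F x i)" for x
  have g_le: "g x \<le> F x i" if "i \<in> I" for x i unfolding g_def using bddF that by (rule cINF_lower)
  have g_ge: "X \<le> g x" if "\<And>i. i \<in> I \<Longrightarrow> X \<le> F x i" for X x
    unfolding g_def using Ine that by (rule cINF_greatest)
  have Fmono: "F x (k, t) \<le> F x (j, t)" if "j \<le> k" "0 \<le> t" for x j k t
  proof -
    have "x + t *\<^sub>R D k \<le> x + t *\<^sub>R D j"
      using Dmono[OF that(1)] that(2) by (intro add_left_mono scaleR_left_mono)
    then show ?thesis unfolding F_def by (simp add: pn_mono)
  qed
  have "sublat g"
    unfolding sublat_def
  proof (intro conjI allI impI)
    fix x y
    show "g (x + y) \<le> g x + g y"
      unfolding g_def[of x] g_def[of y]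
    proof (rule inf_add_bound[OF Ine Ine bddF bddF])
      fix a b assume ab: "a \<in> I" "b \<in> I"
      then obtain j t k s where a: "a = (j, t)" "0 \<le> t" and b: "b = (k, s)" "0 \<le> s"
        using Icases by meson
      define l where "l = max j k"
      have "g (x + y) \<le> F (x + y) (l, t + s)" using a b by (intro g_le) (auto simp: I_def)
      also have "\<dots> = pn ((x + t *\<^sub>R D l) + (y + s *\<^sub>R D l)) - (t + s) * m"
        by (simp add: F_def algebra_simps)
      also have "\<dots> \<le> F x (l, t) + F y (l, s)"
        using pn_add[of "x + t *\<^sub>R D l" "y + s *\<^sub>R D l"] by (simp add: F_def algebra_simps)
      also have "\<dots> \<le> F x a + F y b"
        unfolding a(1) b(1) using a b by (intro add_mono Fmono) (auto simp: l_def)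
      finally show "g (x + y) \<le> F x a + F y b" .
    qed
    show "g (sup x y) \<le> max (g x) (g y)"
      unfolding g_def[of x] g_def[of y]
    proof (rule inf_max_bound[OF Ine Ine bddF bddF])
      fix a b assume ab: "a \<in> I" "b \<in> I"
      then obtain j t k s where a: "a = (j, t)" "0 \<le> t" and b: "b = (k, s)" "0 \<le> s"
        using Icases by meson
      define r where "r = max t s"
      have r: "0 \<le> r" "t \<le> r" "s \<le> r" using a b by (auto simp: r_def)
      show "g (sup x y) \<le> max (F x a) (F y b)"
      proof (rule field_le_epsilon)
        fix e :: real assume e: "0 < e"
        then have e': "0 < e / (r + 1)" using r by simp
        obtain L where L: "norm (D L) < m + e / (r + 1)" using m_approx[OF e'] by blast
        define l where "l = max (max j k) L"
        have Dl: "norm (D l) - m \<le> e / (r + 1)" using Nmono[of L l] L by (simp add: l_def)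
        have Dl0: "0 \<le> norm (D l) - m" using m_le[of l] by simp
        have slack: "(r - t') * (norm (D l) - m) \<le> e" if "0 \<le> t'" "t' \<le> r" for t'
        proof -
          have "(r - t') * (norm (D l) - m) \<le> (r + 1) * (e / (r + 1))"
            using that r Dl Dl0 by (intro mult_mono) auto
          also have "\<dots> = e" using r by simp
          finally show ?thesis .
        qed
        have shift: "pn (z + r *\<^sub>R D l) - r * m \<le> F z (l, t') + e" if "0 \<le> t'" "t' \<le> r" for z t'
        proof -
          have eq: "z + r *\<^sub>R D l = (z + t' *\<^sub>R D l) + (r - t') *\<^sub>R D l" by (simp add: algebra_simps)
          have "pn ((z + t' *\<^sub>R D l) + (r - t') *\<^sub>R D l) \<le> pn (z + t' *\<^sub>R D l) + norm ((r - t') *\<^sub>R D l)"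
            by (rule pn_pos_shift) (use D0[of l] that in \<open>auto intro: scaleR_nonneg_nonneg\<close>)
          then have "pn (z + r *\<^sub>R D l) \<le> pn (z + t' *\<^sub>R D l) + norm ((r - t') *\<^sub>R D l)"
            unfolding eq .
          also have "norm ((r - t') *\<^sub>R D l) = (r - t') * norm (D l)" using that by simp
          finally have "pn (z + r *\<^sub>R D l) - r * m \<le> pn (z + t' *\<^sub>R D l) - t' * m + (r - t') * (norm (D l) - m)"
            by (simp add: algebra_simps)
          then show ?thesis using slack[OF that] by (simp add: F_def)
        qed
        have "g (sup x y) \<le> F (sup x y) (l, r)" using r by (intro g_le) (auto simp: I_def)
        also have "\<dots> = pn (sup (x + r *\<^sub>R D l) (y + r *\<^sub>R D l)) - r * m"
          by (simp add: F_def add_sup_distrib_right)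
        also have "\<dots> = max (pn (x + r *\<^sub>R D l) - r * m) (pn (y + r *\<^sub>R D l) - r * m)"
          by (simp add: pn_sup max_diff_distrib_left)
        also have "\<dots> \<le> max (F x (l, t) + e) (F y (l, s) + e)"
          using r a b by (intro max.mono shift) auto
        also have "\<dots> \<le> max (F x a + e) (F y b + e)"
          unfolding a(1) b(1) using a b by (intro max.mono add_right_mono Fmono) (auto simp: l_def)
        also have "\<dots> = max (F x a) (F y b) + e" by (simp add: max_add_distrib_left)
        finally show "g (sup x y) \<le> max (F x a) (F y b) + e" .
      qed
    qed
  next
    fix c :: real and x :: 'a assume c: "0 \<le> c"
    show "g (c *\<^sub>R x) = c * g x"
    proof (cases "c = 0")
      case True
      have "g 0 \<le> F 0 (0, 0)" by (intro g_le) (auto simp: I_def)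
      then have "g 0 \<le> 0" by (simp add: F_def pn_def)
      moreover have "0 \<le> g 0"
      proof (rule g_ge)
        fix i assume "i \<in> I"
        then obtain j t where i: "i = (j, t)" "0 \<le> t" using Icases by blast
        have "pn (t *\<^sub>R D j) = t * norm (D j)"
          using i D0[of j] by (simp add: pn_nonneg_eq scaleR_nonneg_nonneg)
        then show "0 \<le> F 0 i" using i m_le[of j] by (simp add: F_def mult_left_mono)
      qed
      ultimately show ?thesis using True by simp
    next
      case False
      with c have c': "0 < c" by simp
      have Fsc: "F (c *\<^sub>R x) (j, c * t) = c * F x (j, t)" for j t
      proof -
        have "c *\<^sub>R x + (c * t) *\<^sub>R D j = c *\<^sub>R (x + t *\<^sub>R D j)" by (simp add: algebra_simps)
        then show ?thesis using pn_scale[OF c, of "x + t *\<^sub>R D j"] by (simp add: F_def algebra_simps)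
      qed
      have "g (c *\<^sub>R x) / c \<le> g x"
      proof (rule g_ge)
        fix i assume "i \<in> I"
        then obtain j t where i: "i = (j, t)" "0 \<le> t" using Icases by blast
        have "g (c *\<^sub>R x) \<le> F (c *\<^sub>R x) (j, c * t)" using i c by (intro g_le) (auto simp: I_def)
        then show "g (c *\<^sub>R x) / c \<le> F x i" using i c' Fsc by (simp add: field_simps)
      qed
      moreover have "c * g x \<le> g (c *\<^sub>R x)"
      proof (rule g_ge)
        fix i assume "i \<in> I"
        then obtain j t where i: "i = (j, t)" "0 \<le> t" using Icases by blast
        have "c * g x \<le> c * F x (j, t / c)" using i c' by (intro mult_left_mono g_le) (auto simp: I_def)
        also have "\<dots> = F (c *\<^sub>R x) (j, c * (t / c))" by (rule Fsc[symmetric])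
        finally show "c * g x \<le> F (c *\<^sub>R x) i" using i c' by simp
      qed
      ultimately show ?thesis using c' by (simp add: field_simps)
    qed
  qed
  then obtain \<phi> where phi: "sublat \<phi>" "\<And>x. \<phi> x \<le> g x" "\<And>x. \<phi> (- x) = - \<phi> x"
    using sublat_min_linear by blast
  have add: "\<phi> (x + y) = \<phi> x + \<phi> y" for x y
  proof -
    have e: "\<phi> (- x + - y) = - \<phi> (x + y)" using phi(3)[of "x + y", unfolded minus_add_distrib] .
    have "\<phi> (- x + - y) \<le> \<phi> (- x) + \<phi> (- y)"
      using sublatD(1)[OF phi(1), of "- x" "- y"] .
    then have "\<phi> x + \<phi> y \<le> \<phi> (x + y)" unfolding e phi(3) by simp
    then show ?thesis using sublatD(1)[OF phi(1)] by (simp add: order.antisym)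
  qed
  have scale: "\<phi> (c *\<^sub>R x) = c * \<phi> x" for c x
  proof (cases "0 \<le> c")
    case True show ?thesis using phi(1) True by (rule sublatD)
  next
    case False
    have "\<phi> (c *\<^sub>R x) = \<phi> ((- c) *\<^sub>R (- x))" by simp
    also have "\<dots> = (- c) * \<phi> (- x)" using False phi(1) by (intro sublatD) auto
    finally show ?thesis using phi(3) by simp
  qed
  have diff: "\<phi> (x - y) = \<phi> x - \<phi> y" for x y
    using add[of x "- y"] phi(3)[of y] by simp
  have gpn: "g x \<le> pn x" for x
    using g_le[of "(0, 0)" x] by (simp add: I_def F_def)
  have bnd: "\<bar>\<phi> x\<bar> \<le> norm x" for x
  proof -
    have "\<phi> x \<le> norm x" using phi(2)[of x] gpn[of x] pn_le_norm[of x] by simp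
    moreover have "- \<phi> x \<le> norm x" using phi(2)[of "- x"] gpn[of "- x"] pn_le_norm[of "- x"] phi(3)[of x] by simp
    ultimately show ?thesis by simp
  qed
  have pos: "0 \<le> \<phi> w" if "0 \<le> w" for w
  proof -
    have "\<phi> (- w) \<le> pn (- w)" using phi(2)[of "- w"] gpn[of "- w"] by simp
    also have "pn (- w) = 0" using that by (intro pn_nonpos) simp
    finally show ?thesis using phi(3)[of w] by simp
  qed
  have hom: "\<phi> (sup x y) = max (\<phi> x) (\<phi> y)" for x y
  proof -
    have "0 \<le> \<phi> (sup x y - x)" "0 \<le> \<phi> (sup x y - y)" by (intro pos; simp)+
    then have "max (\<phi> x) (\<phi> y) \<le> \<phi> (sup x y)" using diff by simp
    then show ?thesis using sublatD(3)[OF phi(1)] by (simp add: order.antisym)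
  qed
  have Dj: "\<eta> \<le> \<phi> (D j)" for j
  proof -
    have "g (- D j) \<le> F (- D j) (j, 1)" by (intro g_le) (auto simp: I_def)
    also have "\<dots> = - m" by (simp add: F_def pn_def)
    finally have "\<phi> (- D j) \<le> - m" using phi(2)[of "- D j"] by simp
    then show ?thesis using phi(3)[of "D j"] eta_m by simp
  qed
  show ?thesis using add scale bnd hom Dj by blast
qed


lemma bl_diff: "bounded_linear f \<Longrightarrow> f (x - y) = f x - f y"
  by (rule linear_diff[OF bounded_linear.linear])
lemma bl_add: "bounded_linear f \<Longrightarrow> f (x + y) = f x + f y"
  by (rule linear_add[OF bounded_linear.linear])
lemma bl_minus: "bounded_linear f \<Longrightarrow> f (- x) = - f x"
  by (rule linear_neg[OF bounded_linear.linear])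
lemma bl_zero: "bounded_linear f \<Longrightarrow> f 0 = 0"
  by (rule linear_0[OF bounded_linear.linear])
lemma bl_scale: "bounded_linear (f :: 'a::real_normed_vector \<Rightarrow> real) \<Longrightarrow> f (c *\<^sub>R x) = c * f x"
  using linear_scale[OF bounded_linear.linear, of f c x] by simp

lemma grp_aux: "(p::'b::ab_group_add) - q = a - b \<Longrightarrow> p + b = a + q"
  by (simp add: algebra_simps)

lemma grp_aux2: "(p1::'b::ab_group_add) - q1 = x \<Longrightarrow> p2 - q2 = y \<Longrightarrow> x + y = (p1 + p2) - (q1 + q2)"
  by (simp add: algebra_simps)

lemma grp_aux3: "(p::'b::real_vector) - q = x \<Longrightarrow> c *\<^sub>R x = c *\<^sub>R p - c *\<^sub>R q"
  by (simp add: algebra_simps)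

lemma grp_aux4: "(p::'b::real_vector) - q = x \<Longrightarrow> c *\<^sub>R x = (- c) *\<^sub>R q - (- c) *\<^sub>R p"
  by (simp add: algebra_simps)

definition posf :: "('a::banach_lattice \<Rightarrow> real) \<Rightarrow> bool" where
  "posf P \<longleftrightarrow> bounded_linear P \<and> (\<forall>x. 0 \<le> x \<longrightarrow> 0 \<le> P x)"

lemma posf_mono: "posf P \<Longrightarrow> x \<le> y \<Longrightarrow> P x \<le> P y"
proof -
  assume P: "posf P" and xy: "x \<le> y"
  then have "0 \<le> P (y - x)" unfolding posf_def by auto
  also have "P (y - x) = P y - P x" using P unfolding posf_def by (simp add: bl_diff)
  finally show ?thesis by simp
qed

lemma lmod_ge_self: "x \<le> lmod x" "- x \<le> lmod x"
  unfolding lmod_def by auto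

lemma posf_abs: "posf P \<Longrightarrow> \<bar>P x\<bar> \<le> P (lmod x)"
proof -
  assume P: "posf P"
  have "P x \<le> P (lmod x)" using P lmod_ge_self(1) by (rule posf_mono)
  moreover have "P (- x) \<le> P (lmod x)" using P lmod_ge_self(2) by (rule posf_mono)
  moreover have "P (- x) = - P x" using P unfolding posf_def by (simp add: bl_minus)
  ultimately show ?thesis by simp
qed

lemma pos_neg_parts: "sup x 0 - sup (- x) 0 = (x::'a::banach_lattice)"
proof -
  have "inf x 0 = - sup (- x) 0" using inf_eq_neg_sup[of x 0] by simp
  then show ?thesis using prts[of x] unfolding pprt_def nprt_def by (simp add: algebra_simps)
qed

lemma decomp:
  fixes f :: "'a::banach_lattice \<Rightarrow> real"
  assumes f: "bounded_linear f"
  shows "\<exists>P Q. posf P \<and> posf Q \<and> (\<forall>x. f x = P x - Q x)"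
proof -
  obtain K where K: "K > 0" "\<And>x. norm (f x) \<le> norm x * K"
    using bounded_linear.pos_bounded[OF f] by blast
  have f0: "f 0 = 0" using f by (rule bl_zero)
  define p where "p x = (SUP y\<in>{y. 0 \<le> y \<and> y \<le> x}. f y)" for x
  have ne: "{y. 0 \<le> y \<and> y \<le> x} \<noteq> {}" if "0 \<le> x" for x :: 'a
  proof -
    have "0 \<in> {y. 0 \<le> y \<and> y \<le> x}" using that by (auto intro: order.refl)
    then show ?thesis by blast
  qed
  have bdd: "bdd_above (f ` {y. 0 \<le> y \<and> y \<le> x})" if "0 \<le> x" for x
  proof (rule bdd_aboveI[of _ "norm x * K"])
    fix r assume "r \<in> f ` {y. 0 \<le> y \<and> y \<le> x}"
    then obtain y where y: "0 \<le> y" "y \<le> x" "r = f y" by auto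
    have "r \<le> norm (f y)" using y by simp
    also have "\<dots> \<le> norm y * K" by (rule K)
    also have "\<dots> \<le> norm x * K" using y K by (intro mult_right_mono norm_mono_pos) auto
    finally show "r \<le> norm x * K" .
  qed
  have p_ge: "f y \<le> p x" if "0 \<le> y" "y \<le> x" for x y
    unfolding p_def using bdd[of x] that by (intro cSUP_upper) (auto intro: order.trans)
  have p_le: "p x \<le> X" if "0 \<le> x" "\<And>y. 0 \<le> y \<Longrightarrow> y \<le> x \<Longrightarrow> f y \<le> X" for x X
    unfolding p_def using ne[OF that(1)] that(2) by (intro cSUP_least) auto
  have p_nonneg: "0 \<le> p x" if "0 \<le> x" for x using p_ge[of 0 x] that f0 by simp
  have p_bound: "p x \<le> norm x * K" if "0 \<le> x" for x
  proof (rule p_le[OF that])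
    fix y assume y: "0 \<le> y" "y \<le> x"
    have "f y \<le> norm (f y)" by simp
    also have "\<dots> \<le> norm y * K" by (rule K)
    also have "\<dots> \<le> norm x * K" using y K by (intro mult_right_mono norm_mono_pos) auto
    finally show "f y \<le> norm x * K" .
  qed
  have p_add: "p (a + b) = p a + p b" if a: "0 \<le> a" and b: "0 \<le> b" for a b
  proof (rule order.antisym)
    show "p (a + b) \<le> p a + p b"
    proof (rule p_le)
      show "0 \<le> a + b" using a b by simp
      fix y assume y: "0 \<le> y" "y \<le> a + b"
      define y1 where "y1 = inf y a"
      have y1: "0 \<le> y1" "y1 \<le> a" using y a by (auto simp: y1_def)
      have y2: "0 \<le> y - y1" "y - y1 \<le> b"
      proof -
        have "y1 \<le> y" by (simp add: y1_def)
        then show "0 \<le> y - y1" by (simp only: diff_ge_0_iff_ge)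
        have "y \<le> inf (b + y) (b + a)" using y b by (simp add: add_increasing add.commute)
        then have "y \<le> b + y1" by (simp add: y1_def add_inf_distrib_left)
        then show "y - y1 \<le> b" by (simp add: algebra_simps)
      qed
      have "f y = f y1 + f (y - y1)" using f by (simp add: bl_diff)
      also have "\<dots> \<le> p a + p b" using p_ge y1 y2 by (intro add_mono) auto
      finally show "f y \<le> p a + p b" .
    qed
    have "p a \<le> p (a + b) - p b"
    proof (rule p_le[OF a])
      fix y1 assume y1: "0 \<le> y1" "y1 \<le> a"
      have "p b \<le> p (a + b) - f y1"
      proof (rule p_le[OF b])
        fix y2 assume y2: "0 \<le> y2" "y2 \<le> b"
        have "f y1 + f y2 = f (y1 + y2)" using f by (simp add: bl_add)
        also have "\<dots> \<le> p (a + b)" using y1 y2 by (intro p_ge) (auto intro: add_mono)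
        finally show "f y2 \<le> p (a + b) - f y1" by simp
      qed
      then show "f y1 \<le> p (a + b) - p b" by simp
    qed
    then show "p a + p b \<le> p (a + b)" by simp
  qed
  have p_scale: "p (c *\<^sub>R x) = c * p x" if c: "0 \<le> c" and x: "0 \<le> x" for c x
  proof (cases "c = 0")
    case True
    have "p 0 \<le> 0" by (rule p_le) (auto simp: f0 dest: order.antisym)
    moreover have "0 \<le> p 0" using p_nonneg[of 0] by simp
    ultimately show ?thesis using True by simp
  next
    case False
    with c have c': "0 < c" by simp
    have cx: "0 \<le> c *\<^sub>R x" using c x by (simp add: scaleR_nonneg_nonneg)
    have "p (c *\<^sub>R x) \<le> c * p x"
    proof (rule p_le[OF cx])
      fix y assume y: "0 \<le> y" "y \<le> c *\<^sub>R x"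
      have "0 \<le> inverse c *\<^sub>R y" using y c' by (simp add: scaleR_nonneg_nonneg)
      moreover have "inverse c *\<^sub>R y \<le> x"
      proof -
        have "inverse c *\<^sub>R y \<le> inverse c *\<^sub>R (c *\<^sub>R x)" using y c' by (intro scaleR_left_mono) auto
        then show ?thesis using c' by simp
      qed
      ultimately have h1: "f (inverse c *\<^sub>R y) \<le> p x" by (rule p_ge)
      have "f (inverse c *\<^sub>R y) = inverse c * f y" using f by (rule bl_scale)
      then have h2: "f y = c * f (inverse c *\<^sub>R y)" using c' by simp
      have "c * f (inverse c *\<^sub>R y) \<le> c * p x" using h1 c' by (intro mult_left_mono) auto
      then show "f y \<le> c * p x" using h2 by simp
    qed
    moreover have "p x \<le> p (c *\<^sub>R x) / c"
    proof (rule p_le[OF x])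
      fix y assume y: "0 \<le> y" "y \<le> x"
      have "f (c *\<^sub>R y) \<le> p (c *\<^sub>R x)"
        using y c by (intro p_ge scaleR_nonneg_nonneg scaleR_left_mono) auto
      moreover have "f (c *\<^sub>R y) = c * f y" using f by (simp add: bl_scale)
      ultimately show "f y \<le> p (c *\<^sub>R x) / c" using c' by (simp add: field_simps)
    qed
    ultimately show ?thesis using c' by (simp add: field_simps)
  qed
  define P where "P x = p (sup x 0) - p (sup (- x) 0)" for x
  have key: "P x = p a - p b" if a: "0 \<le> a" and b: "0 \<le> b" and x: "x = a - b" for x a b
  proof -
    have "sup x 0 - sup (- x) 0 = a - b" using x pos_neg_parts[of x] by simp
    then have "sup x 0 + b = a + sup (- x) 0" by (rule grp_aux)
    then have "p (sup x 0 + b) = p (a + sup (- x) 0)" by simp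
    then have "p (sup x 0) + p b = p a + p (sup (- x) 0)" using a b by (simp add: p_add)
    then show ?thesis by (simp add: P_def)
  qed
  have pp: "0 \<le> sup x 0" "0 \<le> sup (- x) 0" for x :: 'a by auto
  have Padd: "P (x + y) = P x + P y" for x y
  proof -
    have "x + y = (sup x 0 + sup y 0) - (sup (- x) 0 + sup (- y) 0)"
      by (rule grp_aux2[OF pos_neg_parts pos_neg_parts])
    then have "P (x + y) = p (sup x 0 + sup y 0) - p (sup (- x) 0 + sup (- y) 0)"
      by (intro key) (auto intro: add_nonneg_nonneg)
    then show ?thesis by (simp add: p_add P_def)
  qed
  have Pscale: "P (c *\<^sub>R x) = c * P x" for c x
  proof (cases "0 \<le> c")
    case True
    have "c *\<^sub>R x = c *\<^sub>R sup x 0 - c *\<^sub>R sup (- x) 0"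
      by (rule grp_aux3[OF pos_neg_parts])
    then have "P (c *\<^sub>R x) = p (c *\<^sub>R sup x 0) - p (c *\<^sub>R sup (- x) 0)"
      using True by (intro key) (auto intro: scaleR_nonneg_nonneg)
    then show ?thesis using True by (simp add: p_scale P_def algebra_simps)
  next
    case False
    then have c: "0 \<le> - c" by simp
    have "c *\<^sub>R x = (- c) *\<^sub>R sup (- x) 0 - (- c) *\<^sub>R sup x 0"
      by (rule grp_aux4[OF pos_neg_parts])
    moreover have n1: "0 \<le> (- c) *\<^sub>R sup (- x) 0" using c by (intro scaleR_nonneg_nonneg) auto
    moreover have n2: "0 \<le> (- c) *\<^sub>R sup x 0" using c by (intro scaleR_nonneg_nonneg) auto
    ultimately have "P (c *\<^sub>R x) = p ((- c) *\<^sub>R sup (- x) 0) - p ((- c) *\<^sub>R sup x 0)"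
      using key by blast
    moreover have s1: "p ((- c) *\<^sub>R sup (- x) 0) = (- c) * p (sup (- x) 0)" using c by (intro p_scale) auto
    moreover have s2: "p ((- c) *\<^sub>R sup x 0) = (- c) * p (sup x 0)" using c by (intro p_scale) auto
    ultimately have e1: "P (c *\<^sub>R x) = (- c) * p (sup (- x) 0) - (- c) * p (sup x 0)" by simp
    have e2: "P x = p (sup x 0) - p (sup (- x) 0)" by (simp add: P_def)
    show ?thesis unfolding e1 e2 by (simp add: algebra_simps)
  qed
  have Pbnd: "norm (P x) \<le> norm x * (2 * K)" for x
  proof -
    have a1: "0 \<le> p (sup x 0)" by (rule p_nonneg) simp
    have a2: "0 \<le> p (sup (- x) 0)" by (rule p_nonneg) simp
    have e2: "P x = p (sup x 0) - p (sup (- x) 0)" by (simp add: P_def)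
    have "norm (P x) \<le> p (sup x 0) + p (sup (- x) 0)"
      unfolding e2 real_norm_def using a1 a2 by (auto simp: abs_le_iff)
    also have "\<dots> \<le> norm (sup x 0) * K + norm (sup (- x) 0) * K"
      by (intro add_mono p_bound pp)
    also have "\<dots> \<le> norm x * K + norm x * K"
      using K norm_sup0_le[of x] norm_sup0_le[of "- x"] by (intro add_mono mult_right_mono) auto
    finally show ?thesis by (simp add: algebra_simps)
  qed
  have Pbl: "bounded_linear P" using Padd Pscale Pbnd by (intro bounded_linear_intro) auto
  have p00: "p 0 = 0" using p_scale[of 0 0] by simp
  have Ppos: "P x = p x" if "0 \<le> x" for x using key[of x 0 x] that p00 by simp
  have posP: "posf P" unfolding posf_def using Pbl Ppos p_nonneg by simp
  have posQ: "posf (\<lambda>x. P x - f x)"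
    unfolding posf_def using Pbl f Ppos p_ge by (auto intro: bounded_linear_sub)
  show ?thesis using posP posQ by (intro exI[of _ P] exI[of _ "\<lambda>x. P x - f x"]) auto
qed

lemma uaw_bdd_weak:
  fixes x :: "nat \<Rightarrow> 'a::am_space"
  assumes bx: "bounded (range x)" and ux: "uaw_convergent_to x 0"
  shows "weakly_convergent_to x 0"
proof -
  obtain M where M: "M > 0" "\<And>n. norm (x n) \<le> M"
    using bx unfolding bounded_pos by auto
  have posconv: "(\<lambda>n. P (lmod (x n))) \<longlonglongrightarrow> 0" if P: "posf P" for P
  proof (rule LIMSEQ_I)
    fix e :: real assume e: "0 < e"
    have Pbl: "bounded_linear P" using P by (simp add: posf_def)
    obtain K where K: "K > 0" "\<And>v. norm (P v) \<le> norm v * K"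
      using bounded_linear.pos_bounded[OF Pbl] by blast
    define B where "B = {v::'a. 0 \<le> v \<and> norm v \<le> 1}"
    have Bne: "B \<noteq> {}" by (auto simp: B_def intro: exI[of _ 0])
    have Bbdd: "bdd_above (P ` B)"
    proof (rule bdd_aboveI[of _ K])
      fix r assume "r \<in> P ` B"
      then obtain v where v: "v \<in> B" "r = P v" by auto
      have "r \<le> norm (P v)" using v by simp
      also have "\<dots> \<le> norm v * K" by (rule K)
      also have "\<dots> \<le> 1 * K" using v K by (intro mult_right_mono) (auto simp: B_def)
      finally show "r \<le> K" by simp
    qed
    define s where "s = (SUP v\<in>B. P v)"
    have s_ge: "P v \<le> s" if "v \<in> B" for v unfolding s_def using that Bbdd by (rule cSUP_upper)
    have "s - e / (2 * M) < s" using e M by simp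
    then obtain u where u: "u \<in> B" "s - e / (2 * M) < P u"
      unfolding s_def using less_cSUP_iff[OF Bne Bbdd] by blast
    define w where "w = M *\<^sub>R u"
    have w0: "0 \<le> w" using u M by (auto simp: w_def B_def intro: scaleR_nonneg_nonneg)
    have wn: "norm w \<le> M" using u M by (auto simp: w_def B_def intro: mult_left_le)
    have "weakly_convergent_to (\<lambda>n. inf (lmod (x n - 0)) w) 0"
      using ux w0 unfolding uaw_convergent_to_def by blast
    then have "(\<lambda>n. P (inf (lmod (x n)) w)) \<longlonglongrightarrow> 0"
      using Pbl unfolding weakly_convergent_to_def by (auto simp: bl_zero)
    then obtain N where N: "\<forall>n\<ge>N. norm (P (inf (lmod (x n)) w) - 0) < e / 2"
      using LIMSEQ_D[of _ 0 "e / 2"] e by (metis half_gt_zero)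
    show "\<exists>N. \<forall>n\<ge>N. norm (P (lmod (x n)) - 0) < e"
    proof (intro exI allI impI)
      fix n assume n: "n \<ge> N"
      define z where "z = lmod (x n)"
      have z0: "0 \<le> z" by (simp add: z_def lmod_ge0)
      have zn: "norm z \<le> M" using M(2)[of n] by (simp add: z_def norm_lmod)
      have split: "z = inf z w + (sup z w - w)"
        using add_eq_inf_sup[of z w] by (simp add: algebra_simps)
      have "P z = P (inf z w) + (P (sup z w) - P w)"
        using Pbl by (subst split) (simp add: bl_add bl_diff)
      moreover have "P (sup z w) \<le> M * s"
      proof -
        define v where "v = inverse M *\<^sub>R sup z w"
        have "0 \<le> v" using z0 w0 M by (auto simp: v_def intro!: scaleR_nonneg_nonneg le_supI1)
        moreover have "norm v \<le> 1"
        proof -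
          have "norm (sup z w) = max (norm z) (norm w)" using z0 w0 by (rule am_norm)
          then have "norm (sup z w) \<le> M" using zn wn by simp
          then show ?thesis using M by (simp add: v_def field_simps)
        qed
        ultimately have "P v \<le> s" by (intro s_ge) (simp add: B_def)
        moreover have "P (sup z w) = M * P v"
          using Pbl M by (simp add: v_def bl_scale)
        ultimately show ?thesis using M by simp
      qed
      moreover have "P w = M * P u" using Pbl by (simp add: w_def bl_scale)
      moreover have "M * (s - e / (2 * M)) < M * P u" using u M by simp
      moreover have "M * (s - e / (2 * M)) = M * s - e / 2" using M by (simp add: field_simps)
      moreover have "norm (P (inf z w)) < e / 2" using N n by (simp add: z_def)
      moreover have "0 \<le> P z" using P z0 by (simp add: posf_def)
      ultimately show "norm (P (lmod (x n)) - 0) < e" by (simp add: z_def)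
    qed
  qed
  show ?thesis
    unfolding weakly_convergent_to_def
  proof (intro allI impI)
    fix f :: "'a \<Rightarrow> real" assume f: "bounded_linear f"
    obtain P Q where PQ: "posf P" "posf Q" "\<And>x. f x = P x - Q x" using decomp[OF f] by blast
    have conv: "(\<lambda>n. R (x n)) \<longlonglongrightarrow> 0" if R: "posf R" for R
      by (rule Lim_null_comparison[OF _ posconv[OF R]]) (use posf_abs[OF R] in auto)
    have "(\<lambda>n. P (x n) - Q (x n)) \<longlonglongrightarrow> 0 - 0" by (intro tendsto_diff conv PQ)
    moreover have "P 0 = 0" "Q 0 = 0" using PQ(1,2) by (simp_all add: posf_def bl_zero)
    ultimately show "(\<lambda>n. f (x n)) \<longlonglongrightarrow> f 0" using PQ(3) by simp
  qed
qed


lemma norming: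
  fixes x :: "'a::am_space"
  shows "\<exists>\<phi>. bounded_linear \<phi> \<and> (\<forall>y. \<bar>\<phi> y\<bar> \<le> norm y) \<and> norm x \<le> \<bar>\<phi> x\<bar>"
proof -
  obtain \<phi> where phi: "\<And>x y. \<phi> (x + y) = \<phi> x + \<phi> y" "\<And>c x. \<phi> (c *\<^sub>R x) = c * \<phi> x"
    "\<And>x. \<bar>\<phi> x\<bar> \<le> norm x" "\<And>x y. \<phi> (sup x y) = max (\<phi> x) (\<phi> y)" "\<And>j::nat. norm x \<le> \<phi> (lmod x)"
    using lattice_hom_exists[where D = "\<lambda>_. lmod x" and \<eta> = "norm x"] by (auto simp: lmod_ge0 norm_lmod)
  have bl: "bounded_linear \<phi>"
    by (rule bounded_linear_intro[where K = 1]) (use phi in auto)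
  have "\<phi> (lmod x) = max (\<phi> x) (\<phi> (- x))" unfolding lmod_def by (rule phi(4))
  also have "\<phi> (- x) = - \<phi> x" using phi(2)[of "-1" x] by simp
  finally have "\<phi> (lmod x) = \<bar>\<phi> x\<bar>" by simp
  then show ?thesis using bl phi(3) phi(5) by auto
qed

lemma weak_null_bounded:
  fixes x :: "nat \<Rightarrow> 'a::am_space"
  assumes wx: "weakly_convergent_to x 0"
  shows "bounded (range x)"
proof -
  define F where "F k = {f :: 'a \<Rightarrow>\<^sub>L real. \<forall>n. norm (blinfun_apply f (x n)) \<le> real k}" for k :: nat
  have contf: "continuous_on UNIV (\<lambda>f::'a \<Rightarrow>\<^sub>L real. norm (blinfun_apply f a))" for a
  proof -
    have "bounded_linear (\<lambda>f::'a \<Rightarrow>\<^sub>L real. blinfun_apply f a)"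
      by (rule bounded_bilinear.bounded_linear_left[OF bounded_bilinear_blinfun_apply])
    then have "continuous_on UNIV (\<lambda>f::'a \<Rightarrow>\<^sub>L real. blinfun_apply f a)"
      by (rule linear_continuous_on)
    then show ?thesis by (rule continuous_on_norm)
  qed
  have closedF: "closed (F k)" for k
  proof -
    have "F k = (\<Inter>n. {f. norm (blinfun_apply f (x n)) \<le> real k})" by (auto simp: F_def)
    moreover have "closed {f::'a \<Rightarrow>\<^sub>L real. norm (blinfun_apply f (x n)) \<le> real k}" for n
      by (rule closed_Collect_le[OF contf continuous_on_const])
    ultimately show ?thesis by (simp add: closed_INT)
  qed
  have cover: "(\<Union>k. F k) = UNIV"
  proof (rule set_eqI, rule iffI)
    fix f :: "'a \<Rightarrow>\<^sub>L real"
    have blf: "bounded_linear (blinfun_apply f)" by (rule blinfun.bounded_linear_right)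
    have "(\<lambda>n. blinfun_apply f (x n)) \<longlonglongrightarrow> blinfun_apply f 0"
      using wx[unfolded weakly_convergent_to_def, rule_format, OF blf] .
    then have "Bseq (\<lambda>n. blinfun_apply f (x n))" by (rule convergent_imp_Bseq[OF convergentI])
    then obtain B where B: "\<And>n. norm (blinfun_apply f (x n)) \<le> B" unfolding Bseq_def by auto
    have "f \<in> F (nat \<lceil>B\<rceil>)" unfolding F_def
    proof (intro CollectI allI)
      fix n show "norm (blinfun_apply f (x n)) \<le> real (nat \<lceil>B\<rceil>)"
        using B[of n] by linarith
    qed
    then show "f \<in> (\<Union>k. F k)" by blast
  qed auto
  have "\<exists>k. interior (F k) \<noteq> {}"
  proof (rule ccontr)
    assume "\<nexists>k. interior (F k) \<noteq> {}"
    then have emp: "\<And>k. interior (F k) = {}" by blast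
    have "euclidean interior_of \<Union>(range F) = {}"
    proof (rule Baire_category_alt)
      show "completely_metrizable_space (euclidean :: ('a \<Rightarrow>\<^sub>L real) topology) \<or>
        locally_compact_space (euclidean :: ('a \<Rightarrow>\<^sub>L real) topology) \<and> regular_space (euclidean :: ('a \<Rightarrow>\<^sub>L real) topology)"
        using completely_metrizable_space_euclidean by blast
      show "countable (range F)" by simp
      fix T assume "T \<in> range F"
      then obtain k where T: "T = F k" by auto
      show "closedin euclidean T \<and> euclidean interior_of T = {}"
      proof -
        have c1: "closedin euclidean (F k)" using closedF[of k] by (simp only: closed_closedin)
        have c2: "euclidean interior_of (F k) = {}" using emp[of k] by (simp only: euclidean_interior_of)
        show ?thesis unfolding T using c1 c2 by blast
      qed
    qed
    then have "interior (UNIV :: ('a \<Rightarrow>\<^sub>L real) set) = {}" using cover by simp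
    then show False by simp
  qed
  then obtain k where "interior (F k) \<noteq> {}" by blast
  then obtain f0 where "f0 \<in> interior (F k)" by blast
  then obtain r where r: "r > 0" "ball f0 r \<subseteq> F k"
    unfolding mem_interior by blast
  have "f0 \<in> ball f0 r" using r(1) by simp
  then have f0: "f0 \<in> F k" using r(2) by blast
  have bnd: "norm (x n) \<le> 4 * real k / r" for n
  proof -
    obtain \<phi> where phi: "bounded_linear \<phi>" "\<And>y. \<bar>\<phi> y\<bar> \<le> norm y" "norm (x n) \<le> \<bar>\<phi> (x n)\<bar>"
      using norming[of "x n"] by blast
    define h where "h = (\<lambda>y. (r / 2) * \<phi> y)"
    have hbl: "bounded_linear h" unfolding h_def
      by (rule bounded_linear_compose[OF bounded_linear_mult_right phi(1)])
    define g where "g = Blinfun h"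
    have gapp: "blinfun_apply g = h" unfolding g_def by (rule bounded_linear_Blinfun_apply[OF hbl])
    have "norm g \<le> r / 2"
    proof (rule norm_blinfun_bound)
      show "0 \<le> r / 2" using r by simp
      fix y show "norm (blinfun_apply g y) \<le> r / 2 * norm y"
        using phi(2)[of y] r by (simp add: gapp h_def abs_mult)
    qed
    then have "f0 + g \<in> ball f0 r" using r by (simp add: dist_norm)
    then have "f0 + g \<in> F k" using r by auto
    then have A: "norm (blinfun_apply f0 (x n) + h (x n)) \<le> real k"
      unfolding F_def by (simp add: blinfun.add_left gapp)
    have B: "norm (blinfun_apply f0 (x n)) \<le> real k" using f0 unfolding F_def by simp
    have "norm (h (x n)) \<le> 2 * real k"
      using norm_triangle_ineq4[of "blinfun_apply f0 (x n) + h (x n)" "blinfun_apply f0 (x n)"] A B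
      by simp
    then have "r / 2 * \<bar>\<phi> (x n)\<bar> \<le> 2 * real k" using r by (simp add: h_def abs_mult)
    then have "\<bar>\<phi> (x n)\<bar> \<le> 4 * real k / r" using r by (simp add: field_simps)
    then show ?thesis using phi(3) by simp
  qed
  show ?thesis unfolding bounded_iff using bnd by blast
qed


primrec Gs :: "(nat \<Rightarrow> 'a::lattice) \<Rightarrow> nat \<Rightarrow> nat \<Rightarrow> 'a" where
  "Gs g n 0 = g n"
| "Gs g n (Suc l) = sup (Gs g n l) (g (n + Suc l))"

lemma Gs_ge: "n \<le> k \<Longrightarrow> k \<le> n + l \<Longrightarrow> g k \<le> Gs g n l"
proof (induction l)
  case 0 then show ?case by simp
next
  case (Suc l)
  show ?case
  proof (cases "k \<le> n + l")
    case True
    then have "g k \<le> Gs g n l" using Suc by simp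
    then show ?thesis by (simp add: le_supI1)
  next
    case False
    then have "k = n + Suc l" using Suc.prems by simp
    then show ?thesis by simp
  qed
qed

lemma Gs_least: "(\<And>k. n \<le> k \<Longrightarrow> k \<le> n + l \<Longrightarrow> g k \<le> v) \<Longrightarrow> Gs g n l \<le> v"
proof (induction l)
  case 0 then show ?case by simp
next
  case (Suc l)
  have "Gs g n l \<le> v" using Suc.prems by (intro Suc.IH) auto
  moreover have "g (n + Suc l) \<le> v" using Suc.prems by simp
  ultimately show ?case by simp
qed

lemma Gs_mono: "l \<le> l' \<Longrightarrow> Gs g n l \<le> Gs g n l'"
proof (rule Gs_least)
  fix k assume "l \<le> l'" "n \<le> k" "k \<le> n + l"
  then show "g k \<le> Gs g n l'" by (intro Gs_ge) auto
qed

lemma Gs_shift: "Gs g (Suc n) l \<le> Gs g n (Suc l)"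
proof (rule Gs_least)
  fix k assume "Suc n \<le> k" "k \<le> Suc n + l"
  then show "g k \<le> Gs g n (Suc l)" by (intro Gs_ge) auto
qed

lemma Gs_phi:
  assumes hom: "\<And>a b. \<phi> (sup a b) = max (\<phi> a) (\<phi> b :: real)"
  shows "\<exists>k. n \<le> k \<and> k \<le> n + l \<and> \<phi> (Gs g n l) = \<phi> (g k)"
proof (induction l)
  case 0 then show ?case by auto
next
  case (Suc l)
  then obtain k where k: "n \<le> k" "k \<le> n + l" "\<phi> (Gs g n l) = \<phi> (g k)" by blast
  show ?case
  proof (cases "\<phi> (g (n + Suc l)) \<le> \<phi> (Gs g n l)")
    case True
    then show ?thesis using k by (intro exI[of _ k]) (simp add: hom max_def)
  next
    case False
    then show ?thesis by (intro exI[of _ "n + Suc l"]) (simp add: hom max_def)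
  qed
qed

lemma weak_null_uaw_pos:
  fixes x :: "nat \<Rightarrow> 'a::am_space"
  assumes wx: "weakly_convergent_to x 0" and P: "posf P" and u: "0 \<le> u"
  shows "(\<lambda>n. P (inf (lmod (x n)) u)) \<longlonglongrightarrow> 0"
proof (rule ccontr)
  define g where "g n = inf (lmod (x n)) u" for n
  assume nc: "\<not> (\<lambda>n. P (inf (lmod (x n)) u)) \<longlonglongrightarrow> 0"
  have Pbl: "bounded_linear P" using P by (simp add: posf_def)
  have g0: "0 \<le> g n" for n using u lmod_ge0[of "x n"] by (simp add: g_def)
  have gu: "g n \<le> u" for n by (simp add: g_def)
  have Pg0: "0 \<le> P (g n)" for n using P g0 by (simp add: posf_def)
  obtain \<delta> where \<delta>: "\<delta> > 0" "\<And>N. \<exists>k\<ge>N. \<delta> \<le> P (g k)"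
  proof -
    have "\<not> (\<forall>r>0. \<exists>no. \<forall>n\<ge>no. norm (P (g n) - 0) < r)"
      using nc unfolding LIMSEQ_iff g_def .
    then obtain r where r: "r > 0" "\<And>no. \<exists>n\<ge>no. \<not> norm (P (g n) - 0) < r" by blast
    have "\<exists>k\<ge>N. r \<le> P (g k)" for N
    proof -
      obtain n where "n \<ge> N" "\<not> norm (P (g n) - 0) < r" using r(2) by blast
      then show ?thesis using Pg0[of n] by (intro exI[of _ n]) auto
    qed
    then show ?thesis using that r(1) by blast
  qed
  have GsP: "P (Gs g n l) \<le> P u" for n l
    using P by (rule posf_mono) (rule Gs_least, rule gu)
  have Gs0: "0 \<le> Gs g n l" for n l
    using g0[of n] Gs_ge[of n n l g] by (auto intro: order.trans)
  define a where "a j = (SUP l. P (Gs g j l))" for j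
  have bddA: "bdd_above (range (\<lambda>l. P (Gs g j l)))" for j
    using GsP by (intro bdd_aboveI[of _ "P u"]) auto
  have a_ge: "P (Gs g j l) \<le> a j" for j l unfolding a_def by (rule cSUP_upper[OF _ bddA]) simp
  have a_delta: "\<delta> \<le> a j" for j
  proof -
    obtain k where k: "k \<ge> j" "\<delta> \<le> P (g k)" using \<delta>(2) by blast
    have "g k \<le> Gs g j (k - j)" using k by (intro Gs_ge) auto
    then have "P (g k) \<le> P (Gs g j (k - j))" using P by (intro posf_mono)
    then show ?thesis using k a_ge[of j "k - j"] by simp
  qed
  define e where "e j = \<delta> / 2 ^ (j + 2)" for j :: nat
  have e_pos: "0 < e j" for j using \<delta> by (simp add: e_def)
  have e_Suc: "e j = 2 * e (Suc j)" for j by (simp add: e_def)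
  have "\<exists>l. a j - e j < P (Gs g j l)" for j
  proof -
    have "a j - e j < a j" using e_pos by simp
    then show ?thesis unfolding a_def[of j] using less_cSUP_iff[OF _ bddA] by auto
  qed
  then obtain L where L: "\<And>j. a j - e j < P (Gs g j (L j))" by metis
  define H where "H j = Gs g j (L j)" for j
  define D where "D = rec_nat (H 0) (\<lambda>j d. inf d (H (Suc j)))"
  have D0: "D 0 = H 0" by (simp add: D_def)
  have DS: "D (Suc j) = inf (D j) (H (Suc j))" for j by (simp add: D_def)
  have DH: "D j \<le> H j" for j by (cases j) (simp_all add: DS D0)
  have Dpos: "0 \<le> D j" for j
    by (induction j) (simp_all add: D0 DS H_def Gs0)
  have Ddec: "D (Suc j) \<le> D j" for j by (simp add: DS)
  have Plin: "P (inf a' b') = P a' + P b' - P (sup a' b')" for a' b'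
  proof -
    have "P a' + P b' = P (sup a' b') + P (inf a' b')"
      using add_eq_inf_sup[of a' b'] Pbl by (metis bl_add)
    then show ?thesis by simp
  qed
  have inv: "a j - \<delta> / 2 + e j \<le> P (D j)" for j
  proof (induction j)
    case 0
    have "e 0 = \<delta> / 4" by (simp add: e_def)
    then show ?case using L[of 0] by (simp add: D0 H_def)
  next
    case (Suc j)
    define M where "M = max (L j) (Suc (L (Suc j)))"
    have "D j \<le> Gs g j M"
      using DH[of j] Gs_mono[of "L j" M g j] by (auto simp: H_def M_def intro: order.trans)
    moreover have "H (Suc j) \<le> Gs g j M"
      using Gs_shift[of g j "L (Suc j)"] Gs_mono[of "Suc (L (Suc j))" M g j]
      by (auto simp: H_def M_def intro: order.trans)
    ultimately have "sup (D j) (H (Suc j)) \<le> Gs g j M" by simp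
    then have "P (sup (D j) (H (Suc j))) \<le> a j"
      using P a_ge[of j M] by (meson order.trans posf_mono)
    moreover have "a (Suc j) - e (Suc j) < P (H (Suc j))" using L[of "Suc j"] by (simp add: H_def)
    moreover have "P (D (Suc j)) = P (D j) + P (H (Suc j)) - P (sup (D j) (H (Suc j)))"
      by (simp add: DS Plin)
    ultimately show ?case using Suc.IH e_Suc[of j] by simp
  qed
  have PD: "\<delta> / 2 \<le> P (D j)" for j using inv[of j] a_delta[of j] e_pos[of j] by simp
  obtain K where K: "K > 0" "\<And>v. norm (P v) \<le> norm v * K"
    using bounded_linear.pos_bounded[OF Pbl] by blast
  define \<eta> where "\<eta> = \<delta> / (2 * K)"
  have eta_pos: "0 < \<eta>" using \<delta> K by (simp add: \<eta>_def)
  have ND: "\<eta> \<le> norm (D j)" for j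
  proof -
    have "\<delta> / 2 \<le> norm (D j) * K" using PD[of j] K(2)[of "D j"] by simp
    then show ?thesis using K by (simp add: \<eta>_def field_simps)
  qed
  obtain \<phi> where phi: "\<And>x y. \<phi> (x + y) = \<phi> x + \<phi> y" "\<And>c x. \<phi> (c *\<^sub>R x) = c * \<phi> x"
    "\<And>x. \<bar>\<phi> x\<bar> \<le> norm x" "\<And>x y. \<phi> (sup x y) = max (\<phi> x) (\<phi> y)" "\<And>j. \<eta> \<le> \<phi> (D j)"
    using lattice_hom_exists[where D = D and \<eta> = \<eta>, OF Dpos Ddec ND] by blast
  have phimono: "\<phi> a' \<le> \<phi> b'" if "a' \<le> b'" for a' b'
  proof -
    have "\<phi> b' = \<phi> (sup a' b')" using that by (simp add: sup.absorb2)
    then show ?thesis using phi(4) by simp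
  qed
  have phibl: "bounded_linear \<phi>"
    by (rule bounded_linear_intro[where K = 1]) (use phi in auto)
  have "(\<lambda>k. \<phi> (x k)) \<longlonglongrightarrow> \<phi> 0"
    using wx[unfolded weakly_convergent_to_def, rule_format, OF phibl] .
  then have "(\<lambda>k. \<phi> (x k)) \<longlonglongrightarrow> 0" using bl_zero[OF phibl] by simp
  then obtain N where N: "\<forall>k\<ge>N. norm (\<phi> (x k) - 0) < \<eta>"
    using LIMSEQ_D[of _ 0 \<eta>] eta_pos by blast
  obtain k where k: "N \<le> k" "k \<le> N + L N" "\<phi> (Gs g N (L N)) = \<phi> (g k)"
    using Gs_phi[of \<phi> N "L N" g, OF phi(4)] by blast
  have "\<eta> \<le> \<phi> (D N)" by (rule phi(5))
  also have "\<dots> \<le> \<phi> (H N)" using DH[of N] by (rule phimono)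
  also have "\<dots> = \<phi> (g k)" using k by (simp add: H_def)
  also have "\<dots> \<le> \<phi> (lmod (x k))" unfolding g_def by (rule phimono) simp
  also have "\<phi> (lmod (x k)) = \<bar>\<phi> (x k)\<bar>"
  proof -
    have "\<phi> (lmod (x k)) = max (\<phi> (x k)) (\<phi> (- x k))" unfolding lmod_def by (rule phi(4))
    also have "\<phi> (- x k) = - \<phi> (x k)" using phi(2)[of "-1" "x k"] by simp
    finally show ?thesis by simp
  qed
  finally have "\<eta> \<le> \<bar>\<phi> (x k)\<bar>" .
  moreover have "\<bar>\<phi> (x k)\<bar> < \<eta>" using N k(1) by simp
  ultimately show False by simp
qed

lemma weak_null_uaw:
  fixes x :: "nat \<Rightarrow> 'a::am_space"
  assumes wx: "weakly_convergent_to x 0"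
  shows "uaw_convergent_to x 0"
  unfolding uaw_convergent_to_def weakly_convergent_to_def
proof (intro allI impI)
  fix u :: 'a and f :: "'a \<Rightarrow> real"
  assume u: "0 \<le> u" and f: "bounded_linear f"
  obtain P Q where PQ: "posf P" "posf Q" "\<And>x. f x = P x - Q x" using decomp[OF f] by blast
  have "(\<lambda>n. P (inf (lmod (x n)) u) - Q (inf (lmod (x n)) u)) \<longlonglongrightarrow> 0 - 0"
    by (intro tendsto_diff weak_null_uaw_pos[OF wx] PQ u)
  then show "(\<lambda>n. f (inf (lmod (x n - 0)) u)) \<longlonglongrightarrow> f 0"
    using PQ(3) bl_zero[OF f] by simp
qed

theorem corollary3p7:
  fixes T :: "'a::am_space \<Rightarrow> 'b::banach"
  assumes "bounded_linear T"
  shows "uaw_dunford_pettis T \<longleftrightarrow> dunford_pettis T"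
proof
  assume uT: "uaw_dunford_pettis T"
  show "dunford_pettis T"
    unfolding dunford_pettis_def
  proof (intro allI impI)
    fix x :: "nat \<Rightarrow> 'a" assume wx: "weakly_convergent_to x 0"
    have "bounded (range x)" using wx by (rule weak_null_bounded)
    moreover have "uaw_convergent_to x 0" using wx by (rule weak_null_uaw)
    ultimately show "(\<lambda>n. norm (T (x n))) \<longlonglongrightarrow> 0"
      using uT unfolding uaw_dunford_pettis_def by blast
  qed
next
  assume dT: "dunford_pettis T"
  show "uaw_dunford_pettis T"
    unfolding uaw_dunford_pettis_def
  proof (intro allI impI)
    fix x :: "nat \<Rightarrow> 'a" assume bx: "bounded (range x)" and ux: "uaw_convergent_to x 0"
    have "weakly_convergent_to x 0" using bx ux by (rule uaw_bdd_weak)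
    then show "(\<lambda>n. norm (T (x n))) \<longlonglongrightarrow> 0"
      using dT unfolding dunford_pettis_def by blast
  qed
qed

end
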